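(* Let $X,Y,P$ be Banach spaces, $H:X\times P\rightrightarrows Y$ a set-valued map and $(\overline{x},\overline{p},0)\in\operatorname{Gr}H$. Define $S:P\rightrightarrows X$ by $S(p)=\{x\in X: 0\in H(x,p)\}$, and suppose $H$ is inner semicontinuous at $((\overline{x},\overline{p}),0)$. (i) If $H$ is open with linear rate $c>0$ with respect to $x$ uniformly in $p$ around $((\overline{x},\overline{p}),0)$, then there exist $\overline{r},\overline{t}>0$ such that for every $(x,p)\in B(\overline{x},\overline{r})\times B(\overline{p},\overline{t})$, \[ d(x,S(p))\le c^{-1}d(0,H(x,p)). \] If moreover $H$ is Lipschitz-like with respect to $p$ uniformly in $x$ around $((\overline{x},\overline{p}),0)$, then $S$ is Lipschitz-like around $(\overline{p},\overline{x})$ and \[ \operatorname{lip}S(\overline{p},\overline{x})\le c^{-1}\,\widehat{\operatorname{lip}}_pH((\overline{x},\overline{p}),0). \] (ii) If $H$ is open with linear rate $c>0$ with respect to $p$ uniformly in $x$ around $((\overline{x},\overline{p}),0)$, then there exist $\overline{r},\overline{t}>0$ such that for every $(x,p)\in B(\overline{x},\overline{r})\times B(\overline{p},\overline{t})$, \[ d(p,S^{-1}(x))\le c^{-1}d(0,H(x,p)). \] If moreover $H$ is Lipschitz-like with respect to $x$ uniformly in $p$ around $((\overline{x},\overline{p}),0)$, then $S$ is metrically regular around $(\overline{p},\overline{x})$ and \[ \operatorname{reg}S(\overline{p},\overline{x})\le c^{-1}\,\widehat{\operatorname{lip}}_xH((\overline{x},\overline{p}),0). \]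
   Context: $B(x,r)$ open ball, $\mathbb{D}_Y$ closed unit ball of $Y$, $d(x,A)=\inf_{a\in A}\|x-a\|$ with $d(x,\emptyset)=\infty$. Product spaces carry the sum norm. $H$ is inner semicontinuous at $((\overline{x},\overline{p}),0)$ if for every open $D\ni 0$ there is a neighborhood $U$ of $(\overline{x},\overline{p})$ with $H(x,p)\cap D\neq\emptyset$ for all $(x,p)\in U$. Write $H_p=H(\cdot,p)$, $H_x=H(x,\cdot)$. $H$ is open with linear rate $c$ with respect to $x$ uniformly in $p$ around $((\overline{x},\overline{p}),\overline{y})$ if there exist $\varepsilon>0$ and neighborhoods $U$ of $\overline{x}$, $V$ of $\overline{p}$, $W$ of $\overline{y}$ such that for every $\rho\in]0,\varepsilon[$, $p\in V$ and $(x,y)\in\operatorname{Gr}H_p\cap(U\times W)$: $B(y,\rho c)\subset H_p(B(x,\rho))$. $H$ is Lipschitz-like with respect to $x$ uniformly in $p$ around $((\overline{x},\overline{p}),\overline{y})$ with constant $L$ if there are such neighborhoods with $H_p(x)\cap W\subset H_p(u)+L\|x-u\|\mathbb{D}_Y$ for all $x,u\in U$, $p\in V$; $\widehat{\operatorname{lip}}_xH((\overline{x},\overline{p}),\overline{y})$ is the infimum of such $L$. The notions "with respect to $p$ uniformly in $x$" (and $\widehat{\operatorname{lip}}_p$) are defined symmetrically, exchanging the roles of $x$ and $p$. A multifunction $T:A\rightrightarrows B$ is Lipschitz-like around $(\overline{a},\overline{b})\in\operatorname{Gr}T$ with constant $L$ if there are neighborhoods $U$ of $\overline{a}$, $V$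 of $\overline{b}$ with $T(a)\cap V\subset T(u)+L\|a-u\|\mathbb{D}_B$ for all $a,u\in U$; $\operatorname{lip}T(\overline{a},\overline{b})$ is the infimum of such $L$. $T$ is metrically regular around $(\overline{a},\overline{b})$ with constant $L$ if there are neighborhoods $U,V$ with $d(a,T^{-1}(b))\le L\,d(b,T(a))$ for all $(a,b)\in U\times V$; $\operatorname{reg}T(\overline{a},\overline{b})$ is the infimum of such $L$. *)

theory Defs
  imports "HOL-Analysis.Analysis"
begin

definition dist_to_set :: "'a::real_normed_vector \<Rightarrow> 'a set \<Rightarrow> ereal" where
  "dist_to_set x A = (if A = {} then \<infinity> else ereal (infdist x A))"

definition inner_semicontinuous ::
  "('x::real_normed_vector \<Rightarrow> 'p::real_normed_vector \<Rightarrow> 'y::real_normed_vector set)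
    \<Rightarrow> 'x \<Rightarrow> 'p \<Rightarrow> 'y \<Rightarrow> bool" where
  "inner_semicontinuous H xb pb yb \<longleftrightarrow>
     (\<forall>D. open D \<and> yb \<in> D \<longrightarrow>
        (\<exists>U. open U \<and> (xb, pb) \<in> U \<and> (\<forall>x p. (x, p) \<in> U \<longrightarrow> H x p \<inter> D \<noteq> {})))"

definition open_rate_x ::
  "('x::real_normed_vector \<Rightarrow> 'p::real_normed_vector \<Rightarrow> 'y::real_normed_vector set)
    \<Rightarrow> real \<Rightarrow> 'x \<Rightarrow> 'p \<Rightarrow> 'y \<Rightarrow> bool" where
  "open_rate_x H c xb pb yb \<longleftrightarrow>
     (\<exists>\<epsilon>>0. \<exists>U V W. open U \<and> xb \<in> U \<and> open V \<and> pb \<in> V \<and> open W \<and> yb \<in> W \<and>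
        (\<forall>\<rho> p x y. 0 < \<rho> \<and> \<rho> < \<epsilon> \<and> p \<in> V \<and> x \<in> U \<and> y \<in> W \<and> y \<in> H x p \<longrightarrow>
           ball y (\<rho> * c) \<subseteq> (\<Union>u\<in>ball x \<rho>. H u p)))"

definition open_rate_p ::
  "('x::real_normed_vector \<Rightarrow> 'p::real_normed_vector \<Rightarrow> 'y::real_normed_vector set)
    \<Rightarrow> real \<Rightarrow> 'x \<Rightarrow> 'p \<Rightarrow> 'y \<Rightarrow> bool" where
  "open_rate_p H c xb pb yb \<longleftrightarrow>
     (\<exists>\<epsilon>>0. \<exists>U V W. open U \<and> pb \<in> U \<and> open V \<and> xb \<in> V \<and> open W \<and> yb \<in> W \<and>
        (\<forall>\<rho> x p y. 0 < \<rho> \<and> \<rho> < \<epsilon> \<and> x \<in> V \<and> p \<in> U \<and> y \<in> W \<and> y \<in> H x p \<longrightarrow>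
           ball y (\<rho> * c) \<subseteq> (\<Union>q\<in>ball p \<rho>. H x q)))"

definition lipschitz_like_x_const ::
  "('x::real_normed_vector \<Rightarrow> 'p::real_normed_vector \<Rightarrow> 'y::real_normed_vector set)
    \<Rightarrow> real \<Rightarrow> 'x \<Rightarrow> 'p \<Rightarrow> 'y \<Rightarrow> bool" where
  "lipschitz_like_x_const H L xb pb yb \<longleftrightarrow> 0 \<le> L \<and>
     (\<exists>U V W. open U \<and> xb \<in> U \<and> open V \<and> pb \<in> V \<and> open W \<and> yb \<in> W \<and>
        (\<forall>x u p. x \<in> U \<and> u \<in> U \<and> p \<in> V \<longrightarrow>
           H x p \<inter> W \<subseteq> {z + b | z b. z \<in> H u p \<and> norm b \<le> L * norm (x - u)}))"

definition lipschitz_like_x where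
  "lipschitz_like_x H xb pb yb \<longleftrightarrow> (\<exists>L. lipschitz_like_x_const H L xb pb yb)"

definition lip_hat_x where
  "lip_hat_x H xb pb yb = Inf {ereal L | L. lipschitz_like_x_const H L xb pb yb}"

definition lipschitz_like_p_const ::
  "('x::real_normed_vector \<Rightarrow> 'p::real_normed_vector \<Rightarrow> 'y::real_normed_vector set)
    \<Rightarrow> real \<Rightarrow> 'x \<Rightarrow> 'p \<Rightarrow> 'y \<Rightarrow> bool" where
  "lipschitz_like_p_const H L xb pb yb \<longleftrightarrow> 0 \<le> L \<and>
     (\<exists>U V W. open U \<and> pb \<in> U \<and> open V \<and> xb \<in> V \<and> open W \<and> yb \<in> W \<and>
        (\<forall>p q x. p \<in> U \<and> q \<in> U \<and> x \<in> V \<longrightarrow>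
           H x p \<inter> W \<subseteq> {z + b | z b. z \<in> H x q \<and> norm b \<le> L * norm (p - q)}))"

definition lipschitz_like_p where
  "lipschitz_like_p H xb pb yb \<longleftrightarrow> (\<exists>L. lipschitz_like_p_const H L xb pb yb)"

definition lip_hat_p where
  "lip_hat_p H xb pb yb = Inf {ereal L | L. lipschitz_like_p_const H L xb pb yb}"

definition lipschitz_like_const ::
  "('a::real_normed_vector \<Rightarrow> 'b::real_normed_vector set) \<Rightarrow> real \<Rightarrow> 'a \<Rightarrow> 'b \<Rightarrow> bool" where
  "lipschitz_like_const T L ab bb \<longleftrightarrow> 0 \<le> L \<and>
     (\<exists>U V. open U \<and> ab \<in> U \<and> open V \<and> bb \<in> V \<and>
        (\<forall>a u. a \<in> U \<and> u \<in> U \<longrightarrow>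
           T a \<inter> V \<subseteq> {z + b | z b. z \<in> T u \<and> norm b \<le> L * norm (a - u)}))"

definition lipschitz_like where
  "lipschitz_like T ab bb \<longleftrightarrow> (\<exists>L. lipschitz_like_const T L ab bb)"

definition lip where
  "lip T ab bb = Inf {ereal L | L. lipschitz_like_const T L ab bb}"

definition metric_regular_const ::
  "('a::real_normed_vector \<Rightarrow> 'b::real_normed_vector set) \<Rightarrow> real \<Rightarrow> 'a \<Rightarrow> 'b \<Rightarrow> bool" where
  "metric_regular_const T L ab bb \<longleftrightarrow> 0 \<le> L \<and>
     (\<exists>U V. open U \<and> ab \<in> U \<and> open V \<and> bb \<in> V \<and>
        (\<forall>a b. a \<in> U \<and> b \<in> V \<longrightarrow> dist_to_set a {a'. b \<in> T a'} \<le> ereal L * dist_to_set b (T a)))"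

definition metric_regular where
  "metric_regular T ab bb \<longleftrightarrow> (\<exists>L. metric_regular_const T L ab bb)"

definition reg where
  "reg T ab bb = Inf {ereal L | L. metric_regular_const T L ab bb}"

end

theory Submission imports Defs begin

lemma infdist_lessE:
  assumes "A \<noteq> {}" "infdist x A < a" shows "\<exists>y\<in>A. dist x y < a"
proof -
  have "bdd_below (dist x ` A)" by (rule bdd_belowI[where m=0]) auto
  then show ?thesis using assms cINF_less_iff[of A "dist x" a] infdist_notempty[OF assms(1)] by auto
qed

lemma le_eps:
  assumes "0 < k" "\<And>\<eta>. 0 < \<eta> \<Longrightarrow> \<eta> < k \<Longrightarrow> (A::real) \<le> B + \<eta>" shows "A \<le> B"
proof (rule ccontr)
  assume nA: "\<not> A \<le> B"
  define \<eta> where "\<eta> = min ((A-B)/2) (k/2)"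
  have h: "0 < \<eta>" "\<eta> < k" "2*\<eta> \<le> A-B" using nA assms(1) unfolding \<eta>_def by (auto simp: min_def)
  have "A \<le> B + \<eta>" using assms(2)[OF h(1,2)] .
  then show False using h nA by linarith
qed

lemma isc_ball:
  assumes "inner_semicontinuous H xb pb 0" "\<delta> > 0"
  shows "\<exists>r>0. \<exists>t>0. \<forall>x p. x \<in> ball xb r \<and> p \<in> ball pb t \<longrightarrow> H x p \<inter> ball 0 \<delta> \<noteq> {}"
proof -
  obtain U where U: "open U" "(xb, pb) \<in> U" "\<And>x p. (x, p) \<in> U \<Longrightarrow> H x p \<inter> ball 0 \<delta> \<noteq> {}"
    using assms unfolding inner_semicontinuous_def by (meson centre_in_ball open_ball)
  obtain A B where AB: "open A" "open B" "(xb, pb) \<in> A \<times> B" "A \<times> B \<subseteq> U"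
    using open_prod_elim[OF U(1,2)] by blast
  obtain r where r: "r > 0" "ball xb r \<subseteq> A" using AB open_contains_ball by blast
  obtain t where t: "t > 0" "ball pb t \<subseteq> B" using AB open_contains_ball by blast
  show ?thesis using r t AB U(3) by blast
qed

lemma Inf_bound:
  assumes "c > 0" "\<And>L e. P L \<Longrightarrow> e > 0 \<Longrightarrow> Q (L/c + e)"
  shows "Inf {ereal L | L. Q L} \<le> ereal (1/c) * Inf {ereal L | L. P L}"
proof -
  have "ereal (1/c) * Inf {x. \<exists>L. x = ereal L \<and> P L} = Inf {ereal (1/c) * x |x. \<exists>L. x = ereal L \<and> P L}"
    using ereal_Inf_cmult[of "1/c" "\<lambda>x. \<exists>L. x = ereal L \<and> P L"] assms(1) by simp
  also have "Inf {ereal L | L. Q L} \<le> \<dots>"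
  proof (rule Inf_greatest)
    fix z assume "z \<in> {ereal (1/c) * x |x. \<exists>L. x = ereal L \<and> P L}"
    then obtain L where L: "P L" "z = ereal (L/c)" by auto
    show "Inf {ereal L | L. Q L} \<le> z" unfolding L(2)
    proof (rule ereal_le_epsilon2)
      fix e :: real assume "e > 0"
      then have "Q (L/c + e)" using assms L by blast
      then have "Inf {ereal L | L. Q L} \<le> ereal (L/c + e)" by (intro Inf_lower) blast
      then show "Inf {ereal L | L. Q L} \<le> ereal (L/c) + ereal e" by simp
    qed
  qed
  finally show ?thesis by simp
qed


lemma distA:
  fixes H :: "'x::real_normed_vector \<Rightarrow> 'p::real_normed_vector \<Rightarrow> 'y::real_normed_vector set"
  assumes c: "c > 0" and orx: "open_rate_x H c xb pb 0"
    and iscb: "\<And>\<delta>. \<delta> > 0 \<Longrightarrow> \<exists>r>0. \<exists>t>0. \<forall>x p. x \<in> ball xb r \<and> p \<in> ball pb t \<longrightarrow> H x p \<inter> ball 0 \<delta> \<noteq> {}"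
  shows "\<exists>r>0. \<exists>t>0. \<forall>x p. x \<in> ball xb r \<and> p \<in> ball pb t \<longrightarrow>
     {u. 0 \<in> H u p} \<noteq> {} \<and> H x p \<noteq> {} \<and> infdist x {u. 0 \<in> H u p} \<le> infdist 0 (H x p) / c"
proof -
  obtain \<epsilon> U V W where eps: "\<epsilon> > 0" and UVW: "open U" "xb \<in> U" "open V" "pb \<in> V" "open W" "0 \<in> W"
    and opall: "\<forall>\<rho> p x y. 0 < \<rho> \<and> \<rho> < \<epsilon> \<and> p \<in> V \<and> x \<in> U \<and> y \<in> W \<and> y \<in> H x p \<longrightarrow>
           ball y (\<rho> * c) \<subseteq> (\<Union>u\<in>ball x \<rho>. H u p)"
    using orx unfolding open_rate_x_def by (elim exE conjE) blast
  have op: "\<And>\<rho> p x y. 0 < \<rho> \<Longrightarrow> \<rho> < \<epsilon> \<Longrightarrow> p \<in> V \<Longrightarrow> x \<in> U \<Longrightarrow> y \<in> W \<Longrightarrow> y \<in> H x p \<Longrightarrow>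
           ball y (\<rho> * c) \<subseteq> (\<Union>u\<in>ball x \<rho>. H u p)"
    using opall by simp
  obtain e where e: "e > 0" "ball 0 e \<subseteq> W" using UVW open_contains_ball by blast
  define \<delta> where "\<delta> = min (e/2) (\<epsilon>*c/4)"
  have \<delta>: "\<delta> > 0" "2*\<delta> \<le> e" "4*\<delta> \<le> \<epsilon>*c" using e eps c unfolding \<delta>_def by (auto simp: min_def)
  obtain r1 t1 where r1: "r1 > 0" "t1 > 0" and rt1: "\<And>x p. x \<in> ball xb r1 \<Longrightarrow> p \<in> ball pb t1 \<Longrightarrow> H x p \<inter> ball 0 \<delta> \<noteq> {}"
    using iscb[OF \<delta>(1)] by blast
  obtain r2 where r2: "r2 > 0" "ball xb r2 \<subseteq> U" using UVW open_contains_ball by blast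
  obtain t2 where t2: "t2 > 0" "ball pb t2 \<subseteq> V" using UVW open_contains_ball by blast
  define r where "r = min r1 r2"
  define t where "t = min t1 t2"
  have "r > 0" "t > 0" using r1 r2 t2 by (auto simp: r_def t_def)
  moreover
  {
    fix x p assume xp: "x \<in> ball xb r" "p \<in> ball pb t"
    have xU: "x \<in> U" and pV: "p \<in> V" using xp r2 t2 by (auto simp: r_def t_def)
    obtain y0 where y0: "y0 \<in> H x p" "norm y0 < \<delta>" using rt1[of x p] xp by (auto simp: r_def t_def)
    define d where "d = infdist 0 (H x p)"
    have dy0: "d \<le> norm y0" using infdist_le[OF y0(1), of 0] by (simp add: d_def)
    have key: "\<exists>u. 0 \<in> H u p \<and> dist x u < norm y / c + \<eta>"
      if y: "y \<in> H x p" "norm y < 2*\<delta>" and eta: "\<eta> > 0" for y \<eta>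
    proof -
      define \<rho> where "\<rho> = norm y / c + min \<eta> (\<epsilon>/2)"
      have ny: "norm y / c < \<epsilon>/2" using y(2) \<delta> c by (simp add: divide_less_eq)
      have nn: "0 \<le> norm y / c" using c by simp
      have m: "min \<eta> (\<epsilon>/2) > 0" "min \<eta> (\<epsilon>/2) \<le> \<eta>" "min \<eta> (\<epsilon>/2) \<le> \<epsilon>/2" using eta eps by auto
      have \<rho>: "0 < \<rho>" "\<rho> < \<epsilon>" "\<rho> \<le> norm y / c + \<eta>" using ny nn m unfolding \<rho>_def
        by linarith+
      have yW: "y \<in> W" using y(2) \<delta> e by auto
      have "norm y < \<rho> * c" using c eta eps unfolding \<rho>_def by (simp add: algebra_simps)
      then have "0 \<in> ball y (\<rho> * c)" by simp
      then obtain u where "u \<in> ball x \<rho>" "0 \<in> H u p" using op[OF \<rho>(1,2) pV xU yW y(1)] by blast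
      then show ?thesis using \<rho>(3) by auto
    qed
    have ne: "{u. 0 \<in> H u p} \<noteq> {}" using key[OF y0(1) _ zero_less_one] y0 \<delta> by auto
    have "infdist x {u. 0 \<in> H u p} \<le> d / c"
    proof (rule le_eps[OF zero_less_one])
      fix \<eta> :: real assume eta: "0 < \<eta>" "\<eta> < 1"
      have "d < min (d + c*\<eta>/2) \<delta>" using dy0 y0 c eta by auto
      then obtain y where y: "y \<in> H x p" "dist 0 y < min (d + c*\<eta>/2) \<delta>"
        using infdist_lessE[of "H x p" 0] y0 unfolding d_def by blast
      have ny: "norm y < 2*\<delta>" "norm y / c < d/c + \<eta>/2" using y \<delta> c
        by (auto simp: divide_less_eq algebra_simps)
      obtain u where u: "0 \<in> H u p" "dist x u < norm y / c + \<eta>/2" using key[OF y(1) ny(1)] eta by (meson half_gt_zero)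
      have "infdist x {u. 0 \<in> H u p} \<le> dist x u" using u by (intro infdist_le) simp
      then show "infdist x {u. 0 \<in> H u p} \<le> d / c + \<eta>" using u ny by linarith
    qed
    then have "{u. 0 \<in> H u p} \<noteq> {} \<and> H x p \<noteq> {} \<and> infdist x {u. 0 \<in> H u p} \<le> infdist 0 (H x p) / c"
      using ne y0 by (auto simp: d_def)
  }
  ultimately show ?thesis by blast
qed


lemma lipB:
  fixes H :: "'x::real_normed_vector \<Rightarrow> 'p::real_normed_vector \<Rightarrow> 'y::real_normed_vector set"
  assumes c: "c > 0"
    and D: "\<exists>r>0. \<exists>t>0. \<forall>x p. x \<in> ball xb r \<and> p \<in> ball pb t \<longrightarrow>
     {u. 0 \<in> H u p} \<noteq> {} \<and> H x p \<noteq> {} \<and> infdist x {u. 0 \<in> H u p} \<le> infdist 0 (H x p) / c"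
    and L: "lipschitz_like_p_const H L xb pb 0" and e: "e > 0"
  shows "lipschitz_like_const (\<lambda>p. {u. 0 \<in> H u p}) (L/c + e) pb xb"
proof -
  obtain U V W where L0: "0 \<le> L" and UVW: "open U" "pb \<in> U" "open V" "xb \<in> V" "open W" "0 \<in> W"
    and lpall: "\<forall>p q x. p \<in> U \<and> q \<in> U \<and> x \<in> V \<longrightarrow>
           H x p \<inter> W \<subseteq> {z + b | z b. z \<in> H x q \<and> norm b \<le> L * norm (p - q)}"
    using L unfolding lipschitz_like_p_const_def by (elim exE conjE) blast
  have lp: "\<And>p q x. p \<in> U \<Longrightarrow> q \<in> U \<Longrightarrow> x \<in> V \<Longrightarrow>
           H x p \<inter> W \<subseteq> {z + b | z b. z \<in> H x q \<and> norm b \<le> L * norm (p - q)}"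
    using lpall by simp
  obtain r t where rt: "r > 0" "t > 0" and Dx: "\<And>x p. x \<in> ball xb r \<Longrightarrow> p \<in> ball pb t \<Longrightarrow>
     {u. 0 \<in> H u p} \<noteq> {} \<and> infdist x {u. 0 \<in> H u p} \<le> infdist 0 (H x p) / c"
    using D by blast
  obtain t' where t': "t' > 0" "ball pb t' \<subseteq> U \<inter> ball pb t"
    using open_contains_ball[of "U \<inter> ball pb t"] UVW rt by (meson IntI centre_in_ball open_Int open_ball)
  obtain r' where r': "r' > 0" "ball xb r' \<subseteq> V \<inter> ball xb r"
    using open_contains_ball[of "V \<inter> ball xb r"] UVW rt by (meson IntI centre_in_ball open_Int open_ball)
  have L'0: "0 \<le> L/c + e" using L0 c e by simp
  have main: "x \<in> {z + b | z b. z \<in> {u. 0 \<in> H u q} \<and> norm b \<le> (L/c + e) * norm (p - q)}"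
    if pq: "p \<in> ball pb t'" "q \<in> ball pb t'" and x: "x \<in> {u. 0 \<in> H u p} \<inter> ball xb r'" for p q x
  proof (cases "p = q")
    case True
    then show ?thesis using x by force
  next
    case False
    have "0 \<in> H x p \<inter> W" using x UVW by auto
    then obtain z b where zb: "0 = z + b" "z \<in> H x q" "norm b \<le> L * norm (p - q)"
      using lp[of p q x] pq x t' r' by blast
    have "infdist 0 (H x q) \<le> norm z" using infdist_le[OF zb(2), of 0] by simp
    also have "norm z = norm b" using zb(1) by (metis add_eq_0_iff norm_minus_cancel)
    finally have i1: "infdist 0 (H x q) \<le> L * norm (p - q)" using zb(3) by linarith
    have xq: "x \<in> ball xb r" "q \<in> ball pb t" using x pq r' t' by auto
    have ne: "{u. 0 \<in> H u q} \<noteq> {}" and i2: "infdist x {u. 0 \<in> H u q} \<le> infdist 0 (H x q) / c"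
      using Dx[OF xq] by auto
    have "infdist 0 (H x q) / c \<le> L * norm (p - q) / c" using i1 c by (simp add: divide_right_mono)
    moreover have "L * norm (p - q) / c < (L/c + e) * norm (p - q)" using False e
      by (simp add: algebra_simps)
    ultimately have "infdist x {u. 0 \<in> H u q} < (L/c + e) * norm (p - q)" using i2 by linarith
    then obtain x' where x': "x' \<in> {u. 0 \<in> H u q}" "dist x x' < (L/c + e) * norm (p - q)"
      using infdist_lessE[OF ne] by blast
    have "x = x' + (x - x')" by simp
    moreover have "norm (x - x') \<le> (L/c + e) * norm (p - q)" using x'(2) by (simp add: dist_norm)
    ultimately show ?thesis using x'(1) by blast
  qed
  show ?thesis unfolding lipschitz_like_const_def
    apply (rule conjI[OF L'0])
    apply (rule exI[of _ "ball pb t'"], rule exI[of _ "ball xb r'"])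
    using t' r' main by auto
qed

lemma mrC:
  fixes H :: "'x::real_normed_vector \<Rightarrow> 'p::real_normed_vector \<Rightarrow> 'y::real_normed_vector set"
  assumes c: "c > 0"
    and D: "\<exists>r>0. \<exists>t>0. \<forall>x p. x \<in> ball xb r \<and> p \<in> ball pb t \<longrightarrow>
     {q. 0 \<in> H x q} \<noteq> {} \<and> H x p \<noteq> {} \<and> infdist p {q. 0 \<in> H x q} \<le> infdist 0 (H x p) / c"
    and iscb: "\<And>\<delta>. \<delta> > 0 \<Longrightarrow> \<exists>r>0. \<exists>t>0. \<forall>x p. x \<in> ball xb r \<and> p \<in> ball pb t \<longrightarrow> H x p \<inter> ball 0 \<delta> \<noteq> {}"
    and L: "lipschitz_like_x_const H L xb pb 0" and e: "e > 0"
  shows "metric_regular_const (\<lambda>p. {u. 0 \<in> H u p}) (L/c + e) pb xb"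
proof -
  define L' where "L' = L/c + e"
  obtain U V W where L0: "0 \<le> L" and UVW: "open U" "xb \<in> U" "open V" "pb \<in> V" "open W" "0 \<in> W"
    and lpall: "\<forall>x u p. x \<in> U \<and> u \<in> U \<and> p \<in> V \<longrightarrow>
           H x p \<inter> W \<subseteq> {z + b | z b. z \<in> H u p \<and> norm b \<le> L * norm (x - u)}"
    using L unfolding lipschitz_like_x_const_def by (elim exE conjE) blast
  have lp: "\<And>x u p. x \<in> U \<Longrightarrow> u \<in> U \<Longrightarrow> p \<in> V \<Longrightarrow>
           H x p \<inter> W \<subseteq> {z + b | z b. z \<in> H u p \<and> norm b \<le> L * norm (x - u)}"
    using lpall by simp
  have "0 \<le> L/c" using L0 c by simp
  then have L'pos: "L' > 0" and LL': "L/c \<le> L'" using e unfolding L'_def by linarith+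
  obtain r t where rt: "r > 0" "t > 0" and Dx: "\<And>x p. x \<in> ball xb r \<Longrightarrow> p \<in> ball pb t \<Longrightarrow>
     {q. 0 \<in> H x q} \<noteq> {} \<and> H x p \<noteq> {} \<and> infdist p {q. 0 \<in> H x q} \<le> infdist 0 (H x p) / c"
    using D by blast
  obtain a0 where a0: "a0 > 0" "ball xb a0 \<subseteq> U" using UVW open_contains_ball by blast
  define a where "a = min (a0/2) r"
  have a: "a > 0" "2*a \<le> a0" "a \<le> r" using a0 rt by (auto simp: a_def)
  define \<delta> where "\<delta> = c * L' * a"
  have \<delta>: "\<delta> > 0" using c L'pos a by (simp add: \<delta>_def)
  obtain r2 t2 where r2: "r2 > 0" "t2 > 0" and rt2: "\<And>x p. x \<in> ball xb r2 \<Longrightarrow> p \<in> ball pb t2 \<Longrightarrow> H x p \<inter> ball 0 \<delta> \<noteq> {}"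
    using iscb[OF \<delta>] by blast
  obtain tV where tV: "tV > 0" "ball pb tV \<subseteq> V" using UVW open_contains_ball by blast
  define r' where "r' = min a r2"
  define t' where "t' = min t (min t2 tV)"
  have r't': "r' > 0" "t' > 0" using a r2 rt tV by (auto simp: r'_def t'_def)
  have main: "dist_to_set p {q. 0 \<in> H x q} \<le> ereal L' * dist_to_set x {u. 0 \<in> H u p}"
    if xp: "p \<in> ball pb t'" "x \<in> ball xb r'" for p x
  proof -
    have xr: "x \<in> ball xb r" "p \<in> ball pb t" using xp a by (auto simp: r'_def t'_def)
    have Tne: "{q. 0 \<in> H x q} \<noteq> {}" and i1: "infdist p {q. 0 \<in> H x q} \<le> infdist 0 (H x p) / c"
      using Dx[OF xr] by auto
    show ?thesis
    proof (cases "{u. 0 \<in> H u p} = {}")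
      case True
      then show ?thesis using Tne L'pos by (simp add: dist_to_set_def)
    next
      case Sne: False
      define dd where "dd = infdist x {u. 0 \<in> H u p}"
      have dd0: "0 \<le> dd" by (simp add: dd_def infdist_nonneg)
      have "infdist p {q. 0 \<in> H x q} \<le> L' * dd"
      proof (cases "a \<le> dd")
        case True
        obtain y where y: "y \<in> H x p" "norm y < \<delta>" using rt2[of x p] xp by (auto simp: r'_def t'_def)
        have "infdist 0 (H x p) \<le> norm y" using infdist_le[OF y(1), of 0] by simp
        then have "infdist 0 (H x p) / c \<le> \<delta> / c" using y c by (simp add: divide_right_mono)
        also have "\<delta> / c = L' * a" using c by (simp add: \<delta>_def)
        also have "\<dots> \<le> L' * dd" using True L'pos by simp
        finally show ?thesis using i1 by linarith
      next
        case False
        show ?thesis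
        proof (rule le_eps[of "L' * (a - dd)"])
          show "0 < L' * (a - dd)" using False L'pos by simp
          fix \<eta> assume eta: "0 < \<eta>" "\<eta> < L' * (a - dd)"
          have "dd < dd + \<eta>/L'" using eta L'pos by simp
          then obtain x' where x': "x' \<in> {u. 0 \<in> H u p}" "dist x x' < dd + \<eta>/L'"
            using infdist_lessE[OF Sne] unfolding dd_def by blast
          have "\<eta>/L' < a - dd" using eta L'pos by (simp add: divide_less_eq mult.commute)
          then have dx': "dist x x' < a" using x' by linarith
          have "dist xb x < a" using xp by (simp add: r'_def)
          then have "dist xb x' < a0" using dx' a dist_triangle[of xb x' x] by linarith
          then have x'U: "x' \<in> U" using a0 by auto
          have xU: "x \<in> U" using \<open>dist xb x < a\<close> a a0 by auto
          have pV: "p \<in> V" using xp tV by (auto simp: t'_def)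
          have "0 \<in> H x' p \<inter> W" using x' UVW by auto
          then obtain z b where zb: "0 = z + b" "z \<in> H x p" "norm b \<le> L * norm (x' - x)"
            using lp[OF x'U xU pV] by blast
          have "infdist 0 (H x p) \<le> norm z" using infdist_le[OF zb(2), of 0] by simp
          also have "norm z = norm b" using zb(1) by (metis add_eq_0_iff norm_minus_cancel)
          finally have "infdist 0 (H x p) \<le> L * dist x x'" using zb(3) by (simp add: dist_norm norm_minus_commute)
          then have "infdist 0 (H x p) / c \<le> (L/c) * dist x x'" using c by (simp add: divide_right_mono)
          also have "\<dots> \<le> L' * dist x x'" using LL' mult_right_mono[OF LL' zero_le_dist[of x x']] by simp
          also have "\<dots> \<le> L' * (dd + \<eta>/L')" using x' L'pos by simp
          also have "\<dots> = L' * dd + \<eta>" using L'pos by (simp add: algebra_simps)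
          finally show "infdist p {q. 0 \<in> H x q} \<le> L' * dd + \<eta>" using i1 by linarith
        qed
      qed
      then show ?thesis unfolding dist_to_set_def dd_def by (simp only: Tne Sne if_False) simp
    qed
  qed
  show ?thesis unfolding metric_regular_const_def L'_def[symmetric]
    apply (rule conjI) using L'pos apply simp
    apply (rule exI[of _ "ball pb t'"], rule exI[of _ "ball xb r'"])
    using r't' main by auto
qed


lemma swap_open: "open_rate_p H c xb pb y \<Longrightarrow> open_rate_x (\<lambda>p x. H x p) c pb xb y"
  unfolding open_rate_x_def open_rate_p_def by blast

theorem theorem3p6:
  fixes H :: "'x::banach \<Rightarrow> 'p::banach \<Rightarrow> 'y::banach set"
    and S :: "'p \<Rightarrow> 'x set"
    and xb :: 'x and pb :: 'p
  assumes graph: "0 \<in> H xb pb"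
    and S_def: "\<And>p. S p = {x. 0 \<in> H x p}"
    and isc: "inner_semicontinuous H xb pb 0"
  shows
    "(\<forall>c>0. open_rate_x H c xb pb 0 \<longrightarrow>
        (\<exists>r>0. \<exists>t>0. \<forall>x p. x \<in> ball xb r \<and> p \<in> ball pb t \<longrightarrow>
            dist_to_set x (S p) \<le> ereal (1 / c) * dist_to_set 0 (H x p))
      \<and> (lipschitz_like_p H xb pb 0 \<longrightarrow>
            lipschitz_like S pb xb \<and> lip S pb xb \<le> ereal (1 / c) * lip_hat_p H xb pb 0))
   \<and> (\<forall>c>0. open_rate_p H c xb pb 0 \<longrightarrow>
        (\<exists>r>0. \<exists>t>0. \<forall>x p. x \<in> ball xb r \<and> p \<in> ball pb t \<longrightarrow>
            dist_to_set p {q. x \<in> S q} \<le> ereal (1 / c) * dist_to_set 0 (H x p))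
      \<and> (lipschitz_like_x H xb pb 0 \<longrightarrow>
            metric_regular S pb xb \<and> reg S pb xb \<le> ereal (1 / c) * lip_hat_x H xb pb 0))"
proof -
  have Seq: "S = (\<lambda>p. {u. 0 \<in> H u p})" using S_def by auto
  have iscb: "\<And>\<delta>. \<delta> > 0 \<Longrightarrow> \<exists>r>0. \<exists>t>0. \<forall>x p. x \<in> ball xb r \<and> p \<in> ball pb t \<longrightarrow> H x p \<inter> ball 0 \<delta> \<noteq> {}"
    using isc_ball[OF isc] by blast
  have iscb': "\<And>\<delta>. \<delta> > 0 \<Longrightarrow> \<exists>r>0. \<exists>t>0. \<forall>x p. x \<in> ball pb r \<and> p \<in> ball xb t \<longrightarrow> (\<lambda>p x. H x p) x p \<inter> ball 0 \<delta> \<noteq> {}"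
  proof -
    fix \<delta> :: real assume "\<delta> > 0"
    then obtain r t where "r > 0" "t > 0" "\<forall>x p. x \<in> ball xb r \<and> p \<in> ball pb t \<longrightarrow> H x p \<inter> ball 0 \<delta> \<noteq> {}"
      using iscb by blast
    then show "\<exists>r>0. \<exists>t>0. \<forall>x p. x \<in> ball pb r \<and> p \<in> ball xb t \<longrightarrow> (\<lambda>p x. H x p) x p \<inter> ball 0 \<delta> \<noteq> {}"
      by blast
  qed
  have P1: "(\<exists>r>0. \<exists>t>0. \<forall>x p. x \<in> ball xb r \<and> p \<in> ball pb t \<longrightarrow>
            dist_to_set x (S p) \<le> ereal (1 / c) * dist_to_set 0 (H x p))
      \<and> (lipschitz_like_p H xb pb 0 \<longrightarrow>
            lipschitz_like S pb xb \<and> lip S pb xb \<le> ereal (1 / c) * lip_hat_p H xb pb 0)"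
    if c: "c > 0" and orx: "open_rate_x H c xb pb 0" for c
  proof
    have D: "\<exists>r>0. \<exists>t>0. \<forall>x p. x \<in> ball xb r \<and> p \<in> ball pb t \<longrightarrow>
     {u. 0 \<in> H u p} \<noteq> {} \<and> H x p \<noteq> {} \<and> infdist x {u. 0 \<in> H u p} \<le> infdist 0 (H x p) / c"
      using distA[OF c orx iscb] by blast
    then obtain r t where rt: "r > 0" "t > 0" and Dx: "\<And>x p. x \<in> ball xb r \<Longrightarrow> p \<in> ball pb t \<Longrightarrow>
     {u. 0 \<in> H u p} \<noteq> {} \<and> H x p \<noteq> {} \<and> infdist x {u. 0 \<in> H u p} \<le> infdist 0 (H x p) / c"
      by blast
    have "dist_to_set x (S p) \<le> ereal (1 / c) * dist_to_set 0 (H x p)"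
      if "x \<in> ball xb r" "p \<in> ball pb t" for x p
      using Dx[OF that] by (simp add: dist_to_set_def Seq)
    then show "\<exists>r>0. \<exists>t>0. \<forall>x p. x \<in> ball xb r \<and> p \<in> ball pb t \<longrightarrow>
            dist_to_set x (S p) \<le> ereal (1 / c) * dist_to_set 0 (H x p)" using rt by blast
    show "lipschitz_like_p H xb pb 0 \<longrightarrow>
            lipschitz_like S pb xb \<and> lip S pb xb \<le> ereal (1 / c) * lip_hat_p H xb pb 0"
    proof
      assume "lipschitz_like_p H xb pb 0"
      then obtain L where L: "lipschitz_like_p_const H L xb pb 0" unfolding lipschitz_like_p_def by blast
      show "lipschitz_like S pb xb \<and> lip S pb xb \<le> ereal (1 / c) * lip_hat_p H xb pb 0"
        unfolding lipschitz_like_def lip_def lip_hat_p_def Seq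
        using lipB[OF c D L zero_less_one]
          Inf_bound[OF c, of "\<lambda>L. lipschitz_like_p_const H L xb pb 0" "\<lambda>L. lipschitz_like_const (\<lambda>p. {u. 0 \<in> H u p}) L pb xb"]
          lipB[OF c D] by blast
    qed
  qed
  have P2: "(\<exists>r>0. \<exists>t>0. \<forall>x p. x \<in> ball xb r \<and> p \<in> ball pb t \<longrightarrow>
            dist_to_set p {q. x \<in> S q} \<le> ereal (1 / c) * dist_to_set 0 (H x p))
      \<and> (lipschitz_like_x H xb pb 0 \<longrightarrow>
            metric_regular S pb xb \<and> reg S pb xb \<le> ereal (1 / c) * lip_hat_x H xb pb 0)"
    if c: "c > 0" and orp: "open_rate_p H c xb pb 0" for c
  proof
    have "\<exists>r>0. \<exists>t>0. \<forall>x p. x \<in> ball pb r \<and> p \<in> ball xb t \<longrightarrow>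
     {u. 0 \<in> H p u} \<noteq> {} \<and> H p x \<noteq> {} \<and> infdist x {u. 0 \<in> H p u} \<le> infdist 0 (H p x) / c"
      using distA[OF c swap_open[OF orp] iscb'] by simp
    then obtain r t where rt: "r > 0" "t > 0" and Dx: "\<And>x p. x \<in> ball xb t \<Longrightarrow> p \<in> ball pb r \<Longrightarrow>
     {q. 0 \<in> H x q} \<noteq> {} \<and> H x p \<noteq> {} \<and> infdist p {q. 0 \<in> H x q} \<le> infdist 0 (H x p) / c"
      by blast
    have D: "\<exists>r>0. \<exists>t>0. \<forall>x p. x \<in> ball xb r \<and> p \<in> ball pb t \<longrightarrow>
     {q. 0 \<in> H x q} \<noteq> {} \<and> H x p \<noteq> {} \<and> infdist p {q. 0 \<in> H x q} \<le> infdist 0 (H x p) / c"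
      using rt Dx by blast
    have "dist_to_set p {q. x \<in> S q} \<le> ereal (1 / c) * dist_to_set 0 (H x p)"
      if "x \<in> ball xb t" "p \<in> ball pb r" for x p
      using Dx[OF that] by (simp add: dist_to_set_def Seq)
    then show "\<exists>r>0. \<exists>t>0. \<forall>x p. x \<in> ball xb r \<and> p \<in> ball pb t \<longrightarrow>
            dist_to_set p {q. x \<in> S q} \<le> ereal (1 / c) * dist_to_set 0 (H x p)" using rt by blast
    show "lipschitz_like_x H xb pb 0 \<longrightarrow>
            metric_regular S pb xb \<and> reg S pb xb \<le> ereal (1 / c) * lip_hat_x H xb pb 0"
    proof
      assume "lipschitz_like_x H xb pb 0"
      then obtain L where L: "lipschitz_like_x_const H L xb pb 0" unfolding lipschitz_like_x_def by blast
      show "metric_regular S pb xb \<and> reg S pb xb \<le> ereal (1 / c) * lip_hat_x H xb pb 0"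
        unfolding metric_regular_def reg_def lip_hat_x_def Seq
        using mrC[OF c D iscb L zero_less_one]
          Inf_bound[OF c, of "\<lambda>L. lipschitz_like_x_const H L xb pb 0" "\<lambda>L. metric_regular_const (\<lambda>p. {u. 0 \<in> H u p}) L pb xb"]
          mrC[OF c D iscb] by blast
    qed
  qed
  show ?thesis using P1 P2 by blast
qed


end
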